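(* Let $Q(x,y)=\sum_{j=1}^{k}a_j x^{e_{j1}}y^{e_{j2}}$ with $a_j\in\mathbb{R}$ and $e_{j1},e_{j2}\in\mathbb{Z}$. Define $g_2(x,y)=-\frac12\big(Q(x,y)+Q(x^{-1},y^{-1})\big)$ and $\overline{g_2}(x,y)=1$ if $|g_2(x,y)|\ge1$, $\overline{g_2}(x,y)=0$ otherwise. For an integer $m\ge1$ set $$LC(W(x,x^m))=\frac{1}{2\pi}\int_0^{2\pi}\overline{g_2}(e^{it},e^{imt})\,dt,\qquad LC(W(x,y))=\frac{1}{(2\pi)^2}\int_0^{2\pi}\!\!\int_0^{2\pi}\overline{g_2}(e^{it_1},e^{it_2})\,dt_1\,dt_2.$$ Then $LC(W(x,x^m))\to LC(W(x,y))$ as $m\to\infty$.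
   Context: Motivation for notation: for $n$ larger than all $|e_{ji}|$, $W(x,y)=(xy)^n\big((xy)^n+(xy)^{-n}+Q(x,y)+Q(x^{-1},y^{-1})\big)$ is a polynomial, and $LC(W)$ generalises the limiting proportion of non-unimodular roots. On the torus $|x|=|y|=1$ the function $g_2$ is real-valued since the $a_j$ are real. *)

theory Defs
  imports "HOL-Analysis.Analysis"
begin

definition Qpoly :: "nat \<Rightarrow> (nat \<Rightarrow> real) \<Rightarrow> (nat \<Rightarrow> int) \<Rightarrow> (nat \<Rightarrow> int) \<Rightarrow> complex \<Rightarrow> complex \<Rightarrow> complex" where
  "Qpoly k a e1 e2 x y = (\<Sum>j=1..k. complex_of_real (a j) * x powi (e1 j) * y powi (e2 j))"

definition g2 :: "nat \<Rightarrow> (nat \<Rightarrow> real) \<Rightarrow> (nat \<Rightarrow> int) \<Rightarrow> (nat \<Rightarrow> int) \<Rightarrow> complex \<Rightarrow> complex \<Rightarrow> complex" where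
  "g2 k a e1 e2 x y = - (1/2) * (Qpoly k a e1 e2 x y + Qpoly k a e1 e2 (inverse x) (inverse y))"

definition g2bar :: "nat \<Rightarrow> (nat \<Rightarrow> real) \<Rightarrow> (nat \<Rightarrow> int) \<Rightarrow> (nat \<Rightarrow> int) \<Rightarrow> complex \<Rightarrow> complex \<Rightarrow> real" where
  "g2bar k a e1 e2 x y = (if norm (g2 k a e1 e2 x y) \<ge> 1 then 1 else 0)"

definition LC1 :: "nat \<Rightarrow> (nat \<Rightarrow> real) \<Rightarrow> (nat \<Rightarrow> int) \<Rightarrow> (nat \<Rightarrow> int) \<Rightarrow> nat \<Rightarrow> real" where
  "LC1 k a e1 e2 m = 1 / (2 * pi) *
     integral {0..2*pi} (\<lambda>t. g2bar k a e1 e2 (exp (\<i> * complex_of_real t)) (exp (\<i> * complex_of_real (real m * t))))"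

definition LC2 :: "nat \<Rightarrow> (nat \<Rightarrow> real) \<Rightarrow> (nat \<Rightarrow> int) \<Rightarrow> (nat \<Rightarrow> int) \<Rightarrow> real" where
  "LC2 k a e1 e2 = 1 / (2 * pi)^2 *
     integral {0..2*pi} (\<lambda>t1. integral {0..2*pi} (\<lambda>t2.
        g2bar k a e1 e2 (exp (\<i> * complex_of_real t1)) (exp (\<i> * complex_of_real t2))))"

end

theory Submission
  imports Defs "HOL-Complex_Analysis.Complex_Analysis"
begin


lemma set_int_bm:
  fixes g :: "real \<Rightarrow> real"
  assumes [measurable]: "g \<in> borel_measurable borel" and B: "\<And>x. \<bar>g x\<bar> \<le> B"
  shows "set_integrable lborel {a..b} g"
  unfolding set_integrable_def
  by (rule integrableI_bounded_set[where A="{a..b}" and B=B]) (auto simp: B emeasure_lborel_Icc_eq)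

lemma bm_integrable:
  fixes g :: "real \<Rightarrow> real"
  assumes "g \<in> borel_measurable borel" and "\<And>x. \<bar>g x\<bar> \<le> B"
  shows "g integrable_on {a..b}"
  by (rule set_borel_integral_eq_integral(1)[OF set_int_bm[OF assms]])

lemma fub:
  fixes f :: "real \<Rightarrow> real \<Rightarrow> real"
  assumes fm[measurable]: "(\<lambda>p. f (fst p) (snd p)) \<in> borel_measurable borel" and B: "\<And>x y. \<bar>f x y\<bar> \<le> B"
  shows "integral {a..b} (\<lambda>x. integral {a..b} (\<lambda>y. f x y)) = integral {a..b} (\<lambda>y. integral {a..b} (\<lambda>x. f x y))"
proof -
  let ?S = "{a..b}"
  define h where "h x y = indicator ?S x * indicator ?S y * f x y" for x y
  have hm: "case_prod h \<in> borel_measurable (lborel \<Otimes>\<^sub>M lborel)"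
  proof -
    have "(\<lambda>p. indicator (?S \<times> ?S) p * f (fst p) (snd p)) \<in> borel_measurable borel"
      by (intro borel_measurable_times fm borel_measurable_indicator) (auto intro: borel_closed closed_Times)
    moreover have "case_prod h = (\<lambda>p. indicator (?S \<times> ?S) p * f (fst p) (snd p))"
      by (auto simp: h_def indicator_def fun_eq_iff)
    ultimately show ?thesis unfolding lborel_prod measurable_lborel1 by simp
  qed
  have hi: "integrable (lborel \<Otimes>\<^sub>M lborel) (case_prod h)"
  proof (rule integrableI_bounded_set[where A="?S \<times> ?S" and B=B])
    show "?S \<times> ?S \<in> sets (lborel \<Otimes>\<^sub>M lborel)" by simp
    show "emeasure (lborel \<Otimes>\<^sub>M lborel) (?S \<times> ?S) < \<infinity>"
      by (simp add: lborel.emeasure_pair_measure_Times ennreal_mult_less_top emeasure_lborel_Icc_eq)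
  qed (use hm in \<open>auto simp: h_def B abs_mult indicator_def\<close>)
  have f1: "\<And>x. f x \<in> borel_measurable borel"
    using measurable_compose[OF _ fm, of "\<lambda>y. (_, y)"]
    by (simp add: borel_measurable_continuous_onI continuous_intros)
  have f2: "\<And>y. (\<lambda>x. f x y) \<in> borel_measurable borel"
    using measurable_compose[OF _ fm, of "\<lambda>x. (x, _)"]
    by (simp add: borel_measurable_continuous_onI continuous_intros)
  have inner1: "(\<integral>y. h x y \<partial>lborel) = indicator ?S x * integral ?S (\<lambda>y. f x y)" for x
  proof -
    have "(\<integral>y. h x y \<partial>lborel) = indicator ?S x * (LINT y:?S|lborel. f x y)"
      unfolding h_def set_lebesgue_integral_def by (simp add: mult.assoc)
    also have "(LINT y:?S|lborel. f x y) = integral ?S (\<lambda>y. f x y)"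
      by (rule set_borel_integral_eq_integral(2)[OF set_int_bm[OF f1 B]])
    finally show ?thesis .
  qed
  have inner2: "(\<integral>x. h x y \<partial>lborel) = indicator ?S y * integral ?S (\<lambda>x. f x y)" for y
  proof -
    have "(\<integral>x. h x y \<partial>lborel) = indicator ?S y * (LINT x:?S|lborel. f x y)"
    proof -
      have "(\<lambda>x. h x y) = (\<lambda>x. indicator ?S y * (indicator ?S x * f x y))" by (auto simp: h_def fun_eq_iff)
      then show ?thesis unfolding set_lebesgue_integral_def by simp
    qed
    also have "(LINT x:?S|lborel. f x y) = integral ?S (\<lambda>x. f x y)"
      by (rule set_borel_integral_eq_integral(2)[OF set_int_bm[OF f2 B]])
    finally show ?thesis .
  qed
  have fm'[measurable]: "(\<lambda>p. f (fst p) (snd p)) \<in> borel_measurable (lborel \<Otimes>\<^sub>M lborel)"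
    unfolding lborel_prod using fm by simp
  have fm''[measurable]: "(\<lambda>p. f (snd p) (fst p)) \<in> borel_measurable (lborel \<Otimes>\<^sub>M lborel)"
  proof -
    have "(\<lambda>p. f (snd p) (fst p)) \<in> borel_measurable borel"
      using measurable_compose[OF _ fm, of "\<lambda>p. (snd p, fst p)"]
      by (simp add: borel_measurable_continuous_onI continuous_intros)
    then show ?thesis unfolding lborel_prod by simp
  qed
  have m1: "(\<lambda>x. integral ?S (\<lambda>y. f x y)) \<in> borel_measurable borel"
  proof -
    have "(\<lambda>x. \<integral>y. indicator ?S y * f x y \<partial>lborel) \<in> borel_measurable lborel"
      by measurable
    moreover have "\<And>x. (\<integral>y. indicator ?S y * f x y \<partial>lborel) = integral ?S (\<lambda>y. f x y)"
      using set_borel_integral_eq_integral(2)[OF set_int_bm[OF f1 B]]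
      by (simp add: set_lebesgue_integral_def)
    ultimately show ?thesis by simp
  qed
  have m2: "(\<lambda>y. integral ?S (\<lambda>x. f x y)) \<in> borel_measurable borel"
  proof -
    have "(\<lambda>y. \<integral>x. indicator ?S x * f x y \<partial>lborel) \<in> borel_measurable lborel"
      by measurable
    moreover have "\<And>y. (\<integral>x. indicator ?S x * f x y \<partial>lborel) = integral ?S (\<lambda>x. f x y)"
      using set_borel_integral_eq_integral(2)[OF set_int_bm[OF f2 B]]
      by (simp add: set_lebesgue_integral_def)
    ultimately show ?thesis by simp
  qed
  have bd: "\<bar>integral ?S g\<bar> \<le> \<bar>B\<bar> * \<bar>b - a\<bar>" if "\<And>x. \<bar>g x\<bar> \<le> B" "g \<in> borel_measurable borel" for g :: "real \<Rightarrow> real"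
  proof -
    have "norm (integral ?S g) \<le> integral ?S (\<lambda>_. B)"
      using integral_norm_bound_integral[OF bm_integrable[OF that(2,1)], of "\<lambda>_. B"] that(1) by (auto simp: integrable_const_ivl)
    then have "\<bar>integral ?S g\<bar> \<le> integral ?S (\<lambda>_. B)" by simp
    also have "\<dots> \<le> \<bar>B\<bar> * \<bar>b - a\<bar>" by (auto simp: abs_mult mult_ac intro!: mult_right_mono)
    finally show ?thesis .
  qed
  have "(\<integral>y. (\<integral>x. h x y \<partial>lborel) \<partial>lborel) = (\<integral>x. (\<integral>y. h x y \<partial>lborel) \<partial>lborel)"
    using lborel_pair.Fubini_integral[OF hi] .
  hence "(LINT y:?S|lborel. integral ?S (\<lambda>x. f x y)) = (LINT x:?S|lborel. integral ?S (\<lambda>y. f x y))"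
    unfolding inner1 inner2 set_lebesgue_integral_def by simp
  moreover have "(LINT x:?S|lborel. integral ?S (\<lambda>y. f x y)) = integral ?S (\<lambda>x. integral ?S (\<lambda>y. f x y))"
    by (rule set_borel_integral_eq_integral(2)[OF set_int_bm[OF m1, of "\<bar>B\<bar> * \<bar>b - a\<bar>"]])
       (intro bd B f1)
  moreover have "(LINT y:?S|lborel. integral ?S (\<lambda>x. f x y)) = integral ?S (\<lambda>y. integral ?S (\<lambda>x. f x y))"
    by (rule set_borel_integral_eq_integral(2)[OF set_int_bm[OF m2, of "\<bar>B\<bar> * \<bar>b - a\<bar>"]])
       (intro bd B f2)
  ultimately show ?thesis by simp
qed


lemma split_ivl:
  fixes f :: "real \<Rightarrow> real"
  assumes h: "h \<ge> 0" and fi: "f integrable_on {a..a + real m * h}"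
  shows "integral {a..a + real m * h} f = (\<Sum>j<m. integral {a + real j * h .. a + (real j + 1) * h} f)"
  using fi
proof (induction m)
  case 0
  then show ?case by simp
next
  case (Suc m)
  have le: "a + real m * h \<le> a + real (Suc m) * h" using h by (simp add: algebra_simps)
  have le0: "a \<le> a + real m * h" using h by simp
  have fi': "f integrable_on {a..a + real m * h}"
    by (rule integrable_on_subinterval[OF Suc.prems]) (use le in auto)
  have "integral {a..a + real (Suc m) * h} f = integral {a..a + real m * h} f + integral {a + real m * h..a + real (Suc m) * h} f"
    by (rule Henstock_Kurzweil_Integration.integral_combine[symmetric, OF le0 le Suc.prems])
  also have "\<dots> = (\<Sum>j<Suc m. integral {a + real j * h .. a + (real j + 1) * h} f)"
    using Suc.IH[OF fi'] by (simp add: algebra_simps)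
  finally show ?case .
qed

lemma scale_ivl:
  fixes f :: "real \<Rightarrow> real"
  assumes m: "m > 0" and fi: "f integrable_on {0..m * L}"
  shows "integral {0..L} (\<lambda>t. f (m * t)) = integral {0..m * L} f / m"
proof -
  have "(f has_integral integral {0..m * L} f) (cbox 0 (m * L))"
    using fi by (simp add: has_integral_integral)
  from has_integral_affinity'[OF this m, of 0]
  have A: "((\<lambda>x. f (m *\<^sub>R x + 0)) has_integral integral {0..m * L} f /\<^sub>R m ^ DIM(real))
     (cbox ((0 - 0) /\<^sub>R m) ((m * L - 0) /\<^sub>R m))" .
  have S: "cbox ((0 - 0) /\<^sub>R m) ((m * L - 0) /\<^sub>R m) = cbox 0 L" using m by simp
  have V: "integral {0..m * L} f /\<^sub>R m ^ DIM(real) = integral {0..m*L} f / m" by (simp add: divide_inverse mult.commute)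
  have "((\<lambda>t. f (m * t)) has_integral integral {0..m * L} f / m) (cbox 0 L)"
    using A unfolding S V by simp
  then show ?thesis by (simp add: integral_unique)
qed

lemma riemann:
  fixes \<psi> :: "real \<Rightarrow> real" and Z :: "real set" and L :: real and m :: nat and \<tau> :: "nat \<Rightarrow> real"
  assumes L: "L > 0" and m: "m > 0" and Zf: "finite Z" and \<psi>i: "\<psi> integrable_on {0..L}"
    and b: "\<And>x. 0 \<le> \<psi> x \<and> \<psi> x \<le> 1"
    and jump: "\<And>p q. 0 \<le> p \<Longrightarrow> p \<le> q \<Longrightarrow> q \<le> L \<Longrightarrow> \<psi> p \<noteq> \<psi> q \<Longrightarrow> \<exists>z\<in>Z. p \<le> z \<and> z \<le> q"
    and tau: "\<And>j. j < m \<Longrightarrow> real j * (L / m) \<le> \<tau> j \<and> \<tau> j \<le> (real j + 1) * (L / m)"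
  shows "\<bar>(L / m) * (\<Sum>j<m. \<psi> (\<tau> j)) - integral {0..L} \<psi>\<bar> \<le> 2 * real (card Z) * (L / m)"
proof -
  define h where "h = L / m"
  have h: "h > 0" using L m by (simp add: h_def)
  have mh: "0 + real m * h = L" using m by (simp add: h_def)
  define I where "I j = {real j * h .. (real j + 1) * h}" for j
  have split: "integral {0..L} \<psi> = (\<Sum>j<m. integral (I j) \<psi>)"
    using split_ivl[of h \<psi> 0 m] h \<psi>i mh by (simp add: I_def)
  have per: "\<bar>h * \<psi> (\<tau> j) - integral (I j) \<psi>\<bar> \<le> h * (\<Sum>z\<in>Z. of_bool (z \<in> I j))" if j: "j < m" for j
  proof -
    have sub: "I j \<subseteq> {0..L}"
    proof -
      have "(real j + 1) * h \<le> real m * h" using j h by (intro mult_right_mono) auto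
      then show ?thesis using h mh by (auto simp: I_def)
    qed
    have \<psi>j: "\<psi> integrable_on I j" using integrable_on_subinterval[OF \<psi>i sub[unfolded I_def]] by (simp add: I_def)
    have tI: "\<tau> j \<in> I j" using tau[OF j] by (simp add: I_def h_def)
    have cont: "integral (I j) (\<lambda>_. c) = h * c" for c
      using h by (simp add: I_def integral_const_real algebra_simps)
    have s0: "0 \<le> (\<Sum>z\<in>Z. of_bool (z \<in> I j) :: real)" by (simp add: sum_nonneg)
    show ?thesis
    proof (cases "\<forall>p\<in>I j. \<psi> p = \<psi> (\<tau> j)")
      case True
      have "integral (I j) \<psi> = integral (I j) (\<lambda>_. \<psi> (\<tau> j))"
        by (rule integral_cong) (use True in auto)
      then show ?thesis using cont s0 h by simp
    next
      case False
      then obtain p where p: "p \<in> I j" "\<psi> p \<noteq> \<psi> (\<tau> j)" by auto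
      have "\<exists>z\<in>Z. z \<in> I j"
      proof (cases "p \<le> \<tau> j")
        case True
        have "0 \<le> p" "\<tau> j \<le> L" using p(1) tI sub by auto
        then obtain z where "z \<in> Z" "p \<le> z" "z \<le> \<tau> j" using jump[of p "\<tau> j"] True p by blast
        then show ?thesis using p tI unfolding I_def by (meson atLeastAtMost_iff order_trans)
      next
        case False
        have "0 \<le> \<tau> j" "p \<le> L" using p(1) tI sub by auto
        then obtain z where "z \<in> Z" "\<tau> j \<le> z" "z \<le> p" using jump[of "\<tau> j" p] False p by force
        then show ?thesis using p tI unfolding I_def by (meson atLeastAtMost_iff order_trans)
      qed
      then obtain z where z: "z \<in> Z" "z \<in> I j" by auto
      have "1 \<le> (\<Sum>z\<in>Z. of_bool (z \<in> I j) :: real)"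
        using member_le_sum[of z Z "\<lambda>z. of_bool (z \<in> I j) :: real"] z Zf by auto
      moreover have "0 \<le> integral (I j) \<psi>"
        using integral_nonneg[OF \<psi>j] b by auto
      moreover have "integral (I j) \<psi> \<le> h"
      proof -
        have ci: "(\<lambda>_. 1::real) integrable_on I j" by (simp add: I_def integrable_const_ivl)
        have "integral (I j) \<psi> \<le> integral (I j) (\<lambda>_. 1)"
          by (rule integral_le[OF \<psi>j ci]) (simp add: b)
        then show ?thesis using cont[of 1] by simp
      qed
      moreover have "0 \<le> h * \<psi> (\<tau> j)" "h * \<psi> (\<tau> j) \<le> h"
        using b[of "\<tau> j"] h by (auto simp: mult_left_le)
      ultimately have "\<bar>h * \<psi> (\<tau> j) - integral (I j) \<psi>\<bar> \<le> h * 1" by (simp add: abs_le_iff)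
      also have "\<dots> \<le> h * (\<Sum>z\<in>Z. of_bool (z \<in> I j))"
        by (rule mult_left_mono) (use \<open>1 \<le> _\<close> h in auto)
      finally show ?thesis .
    qed
  qed
  have cnt: "(\<Sum>j<m. of_bool (z \<in> I j) :: real) \<le> 2" for z
  proof -
    have "{..<m} \<inter> {j. z \<in> I j} \<subseteq> {nat \<lfloor>z / h\<rfloor> - 1, nat \<lfloor>z / h\<rfloor>}"
    proof
      fix j assume "j \<in> {..<m} \<inter> {j. z \<in> I j}"
      then have "real j * h \<le> z" "z \<le> (real j + 1) * h" by (auto simp: I_def)
      then have "real j \<le> z / h" "z / h \<le> real j + 1" using h by (auto simp: field_simps)
      then have "int j \<le> \<lfloor>z / h\<rfloor>" "\<lfloor>z / h\<rfloor> \<le> int j + 1"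
        by (simp_all add: le_floor_iff floor_le_iff)
      then show "j \<in> {nat \<lfloor>z / h\<rfloor> - 1, nat \<lfloor>z / h\<rfloor>}" by auto
    qed
    then have "card ({..<m} \<inter> {j. z \<in> I j}) \<le> card {nat \<lfloor>z / h\<rfloor> - 1, nat \<lfloor>z / h\<rfloor>}"
      by (intro card_mono) auto
    also have "\<dots> \<le> 2" by (simp add: card_insert_if)
    finally show ?thesis by simp
  qed
  have "\<bar>h * (\<Sum>j<m. \<psi> (\<tau> j)) - integral {0..L} \<psi>\<bar> = \<bar>\<Sum>j<m. h * \<psi> (\<tau> j) - integral (I j) \<psi>\<bar>"
    by (simp add: split sum_distrib_left sum_subtractf)
  also have "\<dots> \<le> (\<Sum>j<m. \<bar>h * \<psi> (\<tau> j) - integral (I j) \<psi>\<bar>)" by (rule sum_abs)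
  also have "\<dots> \<le> (\<Sum>j<m. h * (\<Sum>z\<in>Z. of_bool (z \<in> I j)))" by (intro sum_mono per) auto
  also have "\<dots> = h * (\<Sum>z\<in>Z. \<Sum>j<m. of_bool (z \<in> I j))"
    by (simp add: sum_distrib_left[symmetric] sum.swap[of _ Z])
  also have "\<dots> \<le> h * (\<Sum>z\<in>Z. 2)" using h by (intro mult_left_mono sum_mono cnt) auto
  also have "\<dots> = 2 * real (card Z) * h" by simp
  finally show ?thesis by (simp add: h_def)
qed



context fixes k :: nat and a :: "nat \<Rightarrow> real" and e1 e2 :: "nat \<Rightarrow> int"
begin

definition FF :: "real \<Rightarrow> real \<Rightarrow> real" where
  "FF t1 t2 = - (\<Sum>j=1..k. a j * cos (of_int (e1 j) * t1 + of_int (e2 j) * t2))"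

definition phi :: "real \<Rightarrow> real \<Rightarrow> real" where
  "phi t1 t2 = (if 1 \<le> \<bar>FF t1 t2\<bar> then 1 else 0)"

lemma g2bar_eq: "g2bar k a e1 e2 (exp (\<i> * complex_of_real t1)) (exp (\<i> * complex_of_real t2)) = phi t1 t2"
proof -
  have e: "\<And>(t::real) n. exp (\<i> * complex_of_real t) powi n = exp (\<i> * of_real (of_int n * t))"
    by (simp add: exp_power_int mult_ac)
  have ei: "\<And>(t::real). inverse (exp (\<i> * complex_of_real t)) = exp (\<i> * complex_of_real (-t))"
    by (simp add: exp_minus)
  have c: "\<And>x::real. exp (\<i> * complex_of_real x) + exp (\<i> * complex_of_real (-x)) = 2 * of_real (cos x)"
    by (simp add: cos_exp_eq flip: cos_of_real)
  have "g2 k a e1 e2 (exp (\<i> * complex_of_real t1)) (exp (\<i> * complex_of_real t2)) = of_real (FF t1 t2)"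
    unfolding g2_def Qpoly_def FF_def ei e
    apply (simp add: sum.distrib[symmetric] sum_distrib_right)
    apply (rule sum.cong, simp)
  proof -
    fix j
    have "exp (\<i> * (complex_of_int (e1 j) * complex_of_real t1)) *
         exp (\<i> * (complex_of_int (e2 j) * complex_of_real t2)) + exp (- (\<i> * (complex_of_int (e1 j) * complex_of_real t1))) *
         exp (- (\<i> * (complex_of_int (e2 j) * complex_of_real t2))) = 
         exp (\<i> * complex_of_real (real_of_int (e1 j) * t1 + real_of_int (e2 j) * t2)) + exp (\<i> * complex_of_real (-(real_of_int (e1 j) * t1 + real_of_int (e2 j) * t2)))"
      by (simp flip: exp_add add: algebra_simps)
    also have "\<dots> = 2 * complex_of_real (cos (real_of_int (e1 j) * t1 + real_of_int (e2 j) * t2))" by (rule c)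
    finally have H: "complex_of_real (a j) * (exp (\<i> * (complex_of_int (e1 j) * complex_of_real t1)) *
         exp (\<i> * (complex_of_int (e2 j) * complex_of_real t2)) + exp (- (\<i> * (complex_of_int (e1 j) * complex_of_real t1))) *
         exp (- (\<i> * (complex_of_int (e2 j) * complex_of_real t2)))) = complex_of_real (a j) * (2 * complex_of_real (cos (real_of_int (e1 j) * t1 + real_of_int (e2 j) * t2)))" by simp
    show "complex_of_real (a j) * exp (\<i> * (complex_of_int (e1 j) * complex_of_real t1)) *
         exp (\<i> * (complex_of_int (e2 j) * complex_of_real t2)) +
         complex_of_real (a j) * exp (- (\<i> * (complex_of_int (e1 j) * complex_of_real t1))) *
         exp (- (\<i> * (complex_of_int (e2 j) * complex_of_real t2))) =
         complex_of_real (a j) * complex_of_real (cos (real_of_int (e1 j) * t1 + real_of_int (e2 j) * t2)) * 2"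
      using H by (simp add: algebra_simps)
  qed
  then show ?thesis by (simp add: g2bar_def phi_def)
qed

lemma phi_01: "0 \<le> phi x y" "phi x y \<le> 1" "\<bar>phi x y\<bar> \<le> 1"
  by (auto simp: phi_def)

lemma FF_cont: "continuous_on A (\<lambda>p. FF (f p) (g p))" if "continuous_on A f" "continuous_on A g"
  for f g :: "'b::metric_space \<Rightarrow> real"
  unfolding FF_def by (intro continuous_on_minus continuous_on_sum continuous_on_mult continuous_on_const continuous_on_cos continuous_on_add that)

lemma phi_meas: "(\<lambda>p. phi (fst p) (snd p)) \<in> borel_measurable borel"
proof -
  let ?C = "{p. 1 \<le> \<bar>FF (fst p) (snd p)\<bar>}"
  have "closed ?C"
    by (rule closed_Collect_le) (auto intro!: continuous_intros FF_cont)
  then have "indicator ?C \<in> borel_measurable borel"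
    by (intro borel_measurable_indicator borel_closed)
  moreover have "(\<lambda>p. phi (fst p) (snd p)) = indicator ?C" by (auto simp: phi_def indicator_def fun_eq_iff)
  ultimately show ?thesis by simp
qed

lemma phi_comp: "(\<lambda>x. phi (f x) (g x)) \<in> borel_measurable borel" if "continuous_on UNIV f" "continuous_on UNIV g"
  for f g :: "real \<Rightarrow> real"
  using measurable_compose[OF _ phi_meas, of "\<lambda>x. (f x, g x)"]
  by (simp add: borel_measurable_continuous_onI continuous_on_Pair that)

lemma phi_per: "phi t (s + 2 * pi * real j) = phi t s"
proof -
  have "cos (x + real_of_int (e2 i) * (s + 2 * pi * real j)) = cos (x + real_of_int (e2 i) * s)" for x i
  proof -
    have "x + real_of_int (e2 i) * (s + 2 * pi * real j) = (x + real_of_int (e2 i) * s) + (2 * pi) * of_int (e2 i * int j)"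
      by (simp add: algebra_simps)
    then show ?thesis by (simp only: cos_add cos_int_2pin sin_int_2pin) simp
  qed
  then show ?thesis by (simp add: phi_def FF_def)
qed

lemma jump:
  assumes "p \<le> q" "phi p s \<noteq> phi q s"
  shows "\<exists>z. p \<le> z \<and> z \<le> q \<and> \<bar>FF z s\<bar> = 1"
proof -
  have c: "continuous_on {p..q} (\<lambda>t. \<bar>FF t s\<bar>)" by (intro continuous_intros FF_cont)
  show ?thesis
  proof (cases "1 \<le> \<bar>FF p s\<bar>")
    case True
    then have "\<bar>FF q s\<bar> \<le> 1" using assms by (auto simp: phi_def split: if_splits)
    then show ?thesis using IVT2'[of "\<lambda>t. \<bar>FF t s\<bar>" q 1 p] True assms(1) c by auto
  next
    case False
    then have "1 \<le> \<bar>FF q s\<bar>" using assms by (auto simp: phi_def split: if_splits)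
    then show ?thesis using IVT'[of "\<lambda>t. \<bar>FF t s\<bar>" p 1 q] False assms(1) c by auto
  qed
qed

lemma zeros_finite:
  "(\<forall>t. \<bar>FF t s\<bar> = 1) \<or> finite {t\<in>{0..2*pi}. \<bar>FF t s\<bar> = 1}"
proof (rule disjCI)
  let ?Z = "{t\<in>{0..2*pi}. \<bar>FF t s\<bar> = 1}"
  assume inf: "infinite ?Z"
  define Fc where "Fc z = - (\<Sum>j=1..k. of_real (a j) * cos (of_int (e1 j) * z + of_real (of_int (e2 j) * s)))" for z :: complex
  define H where "H z = Fc z ^ 2 - 1" for z
  have Fr: "Fc (of_real t) = of_real (FF t s)" for t
    by (simp add: Fc_def FF_def flip: cos_of_real)
  have Hz: "H (of_real t) = 0 \<longleftrightarrow> \<bar>FF t s\<bar> = 1" for t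
  proof -
    have "H (of_real t) = of_real ((FF t s)^2 - 1)" by (simp add: H_def Fr)
    also have "\<dots> = 0 \<longleftrightarrow> (FF t s)^2 - 1 = 0" by (simp only: of_real_eq_0_iff)
    also have "\<dots> \<longleftrightarrow> (FF t s)^2 = 1" by simp
    also have "\<dots> \<longleftrightarrow> \<bar>FF t s\<bar> = 1" by (simp add: power2_eq_1_iff abs_if) 
    finally show ?thesis .
  qed
  have hol: "H holomorphic_on UNIV" unfolding H_def Fc_def by (intro holomorphic_intros)
  let ?U = "complex_of_real ` ?Z"
  have "compact (complex_of_real ` {0..2*pi})"
    by (intro compact_continuous_image continuous_intros) auto
  moreover have "infinite ?U" using inf by (auto dest: finite_imageD simp: inj_on_def)
  moreover have "?U \<subseteq> complex_of_real ` {0..2*pi}" by auto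
  ultimately obtain \<xi> where "\<xi> islimpt ?U"
    unfolding compact_eq_Bolzano_Weierstrass by blast
  have "H w = 0" for w
  proof (rule analytic_continuation[of H UNIV ?U \<xi> w])
    fix z assume "z \<in> ?U"
    then show "H z = 0" using Hz by auto
  qed (use hol \<open>\<xi> islimpt ?U\<close> in auto)
  then show "\<forall>t. \<bar>FF t s\<bar> = 1" using Hz by blast
qed


definition R :: "nat \<Rightarrow> real \<Rightarrow> real" where
  "R m s = (1 / real m) * (\<Sum>j<m. phi ((s + real j * (2*pi)) / real m) s)"

lemma R_meas: "R m \<in> borel_measurable borel"
proof (cases "m = 0")
  case True
  have "R 0 = (\<lambda>_. 0)" by (auto simp: R_def fun_eq_iff)
  then show ?thesis using True by simp
next
  case False
  then show ?thesis unfolding R_def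
    by (intro borel_measurable_times borel_measurable_const borel_measurable_sum phi_comp continuous_intros) auto
qed

lemma R_bound: "\<bar>R m s\<bar> \<le> 1"
proof (cases "m = 0")
  case True
  then show ?thesis by (simp add: R_def)
next
  case False
  have "0 \<le> (\<Sum>j<m. phi ((s + real j * (2*pi)) / real m) s)" by (intro sum_nonneg) (simp add: phi_01)
  moreover have "(\<Sum>j<m. phi ((s + real j * (2*pi)) / real m) s) \<le> (\<Sum>j<m. 1)" by (intro sum_mono) (simp add: phi_01)
  ultimately show ?thesis using False by (simp add: R_def abs_mult field_simps)
qed

lemma LC1_eq:
  assumes m: "m > 0"
  shows "LC1 k a e1 e2 m = integral {0..2*pi} (R m) / (2*pi)"
proof -
  define f where "f u = phi (u / real m) u" for u
  have fm: "f \<in> borel_measurable borel" unfolding f_def using m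
    by (intro phi_comp continuous_intros) auto
  have fi: "f integrable_on {a'..b'}" for a' b' by (rule bm_integrable[where B=1, OF fm]) (simp add: f_def phi_01)
  have "LC1 k a e1 e2 m = 1 / (2*pi) * integral {0..2*pi} (\<lambda>t. phi t (real m * t))"
    unfolding LC1_def g2bar_eq by simp
  also have "(\<lambda>t. phi t (real m * t)) = (\<lambda>t. f (real m * t))" using m by (simp add: f_def)
  also have "integral {0..2*pi} (\<lambda>t. f (real m * t)) = integral {0..real m * (2*pi)} f / real m"
    by (rule scale_ivl) (use m fi in auto)
  also have "integral {0..real m * (2*pi)} f = (\<Sum>j<m. integral {real j * (2*pi) .. (real j + 1) * (2*pi)} f)"
    using split_ivl[of "2*pi" f 0 m] fi by simp
  also have "\<dots> = (\<Sum>j<m. integral {0..2*pi} (\<lambda>s. phi ((s + real j * (2*pi)) / real m) s))"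
  proof (rule sum.cong[OF refl])
    fix j
    have "integral {real j * (2*pi) .. (real j + 1) * (2*pi)} f =
        integral {real j * (2*pi) - real j * (2*pi) .. (real j + 1) * (2*pi) - real j * (2*pi)} (\<lambda>x. f (x + real j * (2*pi)))"
      by (rule integral_shift_real_ivl[symmetric])
    also have "\<dots> = integral {0..2*pi} (\<lambda>s. phi ((s + real j * (2*pi)) / real m) s)"
    proof -
      have "f (x + real j * (2*pi)) = phi ((x + real j * (2*pi)) / real m) x" for x
        using phi_per[of "(x + real j * (2*pi)) / real m" x j] by (simp add: f_def mult_ac)
      then show ?thesis by (simp add: algebra_simps)
    qed
    finally show "integral {real j * (2*pi) .. (real j + 1) * (2*pi)} f = integral {0..2*pi} (\<lambda>s. phi ((s + real j * (2*pi)) / real m) s)" .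
  qed
  also have "\<dots> = integral {0..2*pi} (\<lambda>s. \<Sum>j<m. phi ((s + real j * (2*pi)) / real m) s)"
  proof (rule integral_sum[symmetric], simp)
    fix j
    show "(\<lambda>s. phi ((s + real j * (2*pi)) / real m) s) integrable_on {0..2*pi}"
      using m by (intro bm_integrable[where B=1] phi_comp continuous_intros) (auto simp: phi_01)
  qed
  moreover have Rm: "R m = (\<lambda>s. (1 / real m) * (\<Sum>j<m. phi ((s + real j * (2*pi)) / real m) s))"
    by (rule ext) (simp add: R_def)
  ultimately show ?thesis using m by (simp add: Rm)
qed

lemma R_lim:
  assumes s: "s \<in> {0..2*pi}"
  shows "(\<lambda>m. R m s) \<longlonglongrightarrow> integral {0..2*pi} (\<lambda>t. phi t s) / (2*pi)"
  using zeros_finite[of s]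
proof
  assume all: "\<forall>t. \<bar>FF t s\<bar> = 1"
  then have p1: "phi t s = 1" for t by (simp add: phi_def)
  have "integral {0..2*pi} (\<lambda>t. phi t s) / (2*pi) = 1" by (simp add: p1)
  moreover have "eventually (\<lambda>m. R m s = 1) sequentially"
    unfolding eventually_sequentially by (rule exI[of _ 1]) (auto simp: R_def p1)
  ultimately show ?thesis by (simp add: tendsto_eventually)
next
  let ?Z = "{t\<in>{0..2*pi}. \<bar>FF t s\<bar> = 1}"
  assume fin: "finite ?Z"
  have psi: "(\<lambda>t. phi t s) integrable_on {0..2*pi}"
    by (intro bm_integrable[where B=1] phi_comp continuous_intros) (auto simp: phi_01)
  have bnd: "\<bar>R m s - integral {0..2*pi} (\<lambda>t. phi t s) / (2*pi)\<bar> \<le> 2 * real (card ?Z) / real m" if m: "m > 0" for m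
  proof -
    have "\<bar>(2*pi / m) * (\<Sum>j<m. phi ((s + real j * (2*pi)) / real m) s) - integral {0..2*pi} (\<lambda>t. phi t s)\<bar>
       \<le> 2 * real (card ?Z) * (2*pi / m)"
    proof (rule riemann[OF _ m fin psi])
      show "0 < 2*pi" by simp
      show "0 \<le> phi x s \<and> phi x s \<le> 1" for x by (simp add: phi_01)
      show "\<exists>z\<in>?Z. p \<le> z \<and> z \<le> q" if pq: "0 \<le> p" "p \<le> q" "q \<le> 2*pi" "phi p s \<noteq> phi q s" for p q
      proof -
        obtain z where "p \<le> z" "z \<le> q" "\<bar>FF z s\<bar> = 1" using jump[of p q s] pq by blast
        then show ?thesis using pq by (intro bexI[of _ z]) auto
      qed
      show "real j * (2 * pi / real m) \<le> (s + real j * (2 * pi)) / real m \<and>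
          (s + real j * (2 * pi)) / real m \<le> (real j + 1) * (2 * pi / real m)" for j
        using s m by (auto simp: field_simps)
    qed
    moreover have "(2*pi / m) * (\<Sum>j<m. phi ((s + real j * (2*pi)) / real m) s) = 2*pi * R m s"
      by (simp add: R_def)
    ultimately have A: "\<bar>2*pi * R m s - integral {0..2*pi} (\<lambda>t. phi t s)\<bar> \<le> 2*pi * (2 * real (card ?Z) / m)"
      by (simp add: mult_ac)
    have B: "\<bar>2*pi * R m s - integral {0..2*pi} (\<lambda>t. phi t s)\<bar> = 2*pi * \<bar>R m s - integral {0..2*pi} (\<lambda>t. phi t s) / (2*pi)\<bar>"
      by (simp add: abs_mult field_simps)
    have "2*pi * \<bar>R m s - integral {0..2*pi} (\<lambda>t. phi t s) / (2*pi)\<bar> \<le> 2*pi * (2 * real (card ?Z) / m)"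
      using A unfolding B .
    then show ?thesis by (rule mult_left_le_imp_le) simp
  qed
  have "(\<lambda>m. R m s - integral {0..2*pi} (\<lambda>t. phi t s) / (2*pi)) \<longlonglongrightarrow> 0"
  proof (rule Lim_null_comparison)
    show "eventually (\<lambda>m. norm (R m s - integral {0..2*pi} (\<lambda>t. phi t s) / (2*pi)) \<le> 2 * real (card ?Z) / real m) sequentially"
      unfolding eventually_sequentially real_norm_def by (rule exI[of _ 1], intro allI impI bnd) simp
    show "(\<lambda>m. 2 * real (card ?Z) / real m) \<longlonglongrightarrow> 0" by (rule lim_const_over_n)
  qed
  then show ?thesis by (simp add: LIM_zero_iff)
qed

lemma main: "(\<lambda>m. LC1 k a e1 e2 m) \<longlonglongrightarrow> LC2 k a e1 e2"
proof -
  let ?S = "{0..2*pi}"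
  define G where "G s = (1 / (2*pi)) * integral ?S (\<lambda>t. phi t s)" for s
  have conv: "(\<lambda>m. integral ?S (R m)) \<longlonglongrightarrow> integral ?S G"
  proof (rule dominated_convergence(2)[where h="\<lambda>_. 1"])
    show "R m integrable_on ?S" for m by (rule bm_integrable[OF R_meas R_bound])
    show "(\<lambda>_. 1::real) integrable_on ?S" by (simp add: integrable_const_ivl)
    show "norm (R m s) \<le> 1" if "s \<in> ?S" for m s using R_bound by simp
    show "(\<lambda>m. R m s) \<longlonglongrightarrow> G s" if "s \<in> ?S" for s
      using R_lim[OF that] unfolding G_def by simp
  qed
  have ev: "eventually (\<lambda>m. integral ?S (R m) / (2*pi) = LC1 k a e1 e2 m) sequentially"
    unfolding eventually_sequentially by (rule exI[of _ 1]) (auto simp: LC1_eq)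
  have "(\<lambda>m. integral ?S (R m) / (2*pi)) \<longlonglongrightarrow> integral ?S G / (2*pi)"
    by (intro tendsto_divide conv tendsto_const) simp
  from Lim_transform_eventually[OF this ev]
  have lim1: "(\<lambda>m. LC1 k a e1 e2 m) \<longlonglongrightarrow> integral ?S G / (2*pi)" .
  have "integral ?S G = (1 / (2*pi)) * integral ?S (\<lambda>s. integral ?S (\<lambda>t. phi t s))"
    unfolding G_def by (rule integral_mult_right)
  also have "integral ?S (\<lambda>s. integral ?S (\<lambda>t. phi t s)) = integral ?S (\<lambda>t. integral ?S (\<lambda>s. phi t s))"
    by (rule fub[where B=1, OF phi_meas, symmetric]) (rule phi_01(3))
  finally have e: "integral ?S G / (2*pi) = 1 / (2*pi)^2 * integral ?S (\<lambda>t. integral ?S (\<lambda>s. phi t s))"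
    by (simp add: power2_eq_square)
  have L2: "LC2 k a e1 e2 = 1 / (2*pi)^2 * integral ?S (\<lambda>t. integral ?S (\<lambda>s. phi t s))"
    unfolding LC2_def g2bar_eq ..
  show ?thesis unfolding L2 e[symmetric] by (rule lim1)
qed

end

theorem theorem3:
  fixes k :: nat and a :: "nat \<Rightarrow> real" and e1 e2 :: "nat \<Rightarrow> int"
  shows "(\<lambda>m. LC1 k a e1 e2 m) \<longlonglongrightarrow> LC2 k a e1 e2"
  by (rule main)

end
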